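(* Let $L=\{0,1,\dots,m\}^n$ with componentwise order, and let $f_1,\dots,f_n:L\to L$ be inflationary. Consider one round $t$ of a non-interleaving execution with update-only-on-change starting from the committed state $G_t$, in which the functions $f_i$, $i\in S_t$, are executed. Then for every coordinate $j$: (1) every write to coordinate $j$ during round $t$ writes a value $\ge G_t[j]$; (2) $G_{t+1}[j]\ge G_t[j]$; (3) $G_{t+1}[j]=G_t[j]$ if and only if no write to coordinate $j$ occurs during round $t$.
   Context: Non-interleaving execution with update-only-on-change: execution proceeds in rounds $t=0,1,2,\dots$ with committed states $G_t\in L$. In round $t$ a set $S_t\subseteq\{1,\dots,n\}$ is chosen and each $f_i$, $i\in S_t$, is executed concurrently on shared memory: process $i$ reads a vector $X\in L$, where each coordinate $X[k]$ is read at some time during the round and returns either $G_t[k]$ or the value of some write to coordinate $k$ performed during the round (reads and writes overlapping arbitrarily; no memory consistency guarantee). Process $i$ computes $H=f_i(X)$ and, for each coordinate $k$, issues a write of $H[k]$ to coordinate $k$ if and only if $H[k]\neq X[k]$ (update-only-on-change). When several writes to the same coordinate occur, the final value is the value of one of them (last writer wins, in an arbitrary order). At the end of the round, $G_{t+1}[k]$ equals $G_t[k]$ if no write to coordinate $k$ occurred, and otherwise equals the value of one of the writes to coordinate $k$ during the round. A function $f$ is inflationary if $f(G)\ge G$ for all $G$. *)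

theory Defs
  imports Main
begin

text \<open>States: L = {0..m}^n, represented as functions nat => nat whose
  coordinates 0..n-1 lie in {0..m} and which are 0 outside {0..<n}.
  Processes and coordinates are indexed by 0..n-1.\<close>

definition lattice :: "nat \<Rightarrow> nat \<Rightarrow> (nat \<Rightarrow> nat) set" where
  "lattice m n = {x. (\<forall>k<n. x k \<le> m) \<and> (\<forall>k\<ge>n. x k = 0)}"

definition le_L :: "nat \<Rightarrow> (nat \<Rightarrow> nat) \<Rightarrow> (nat \<Rightarrow> nat) \<Rightarrow> bool" where
  "le_L n x y \<longleftrightarrow> (\<forall>k<n. x k \<le> y k)"

definition inflationary :: "nat \<Rightarrow> nat \<Rightarrow> ((nat \<Rightarrow> nat) \<Rightarrow> (nat \<Rightarrow> nat)) \<Rightarrow> bool" where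
  "inflationary m n g \<longleftrightarrow> (\<forall>G\<in>lattice m n. le_L n G (g G))"

text \<open>Values of the writes to coordinate k during the round: process i in S,
  having read the vector X i, writes H[k] with H = f i (X i) iff H[k] differs
  from X i k (update-only-on-change).\<close>
definition writes ::
  "(nat \<Rightarrow> (nat \<Rightarrow> nat) \<Rightarrow> (nat \<Rightarrow> nat)) \<Rightarrow> nat set \<Rightarrow> (nat \<Rightarrow> nat \<Rightarrow> nat) \<Rightarrow> nat \<Rightarrow> nat set" where
  "writes f S X k = {f i (X i) k | i. i \<in> S \<and> f i (X i) k \<noteq> X i k}"

text \<open>Each coordinate read returns
  G k or the value of some write to coordinate k in the round (no memory
  consistency guarantee, so no ordering constraint is imposed); the committed
  value is G k if there is no write to k and otherwise the value of one of
  the writes to k.\<close>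
definition round_exec ::
  "nat \<Rightarrow> nat \<Rightarrow> (nat \<Rightarrow> (nat \<Rightarrow> nat) \<Rightarrow> (nat \<Rightarrow> nat)) \<Rightarrow> (nat \<Rightarrow> nat) \<Rightarrow> nat set
    \<Rightarrow> (nat \<Rightarrow> nat \<Rightarrow> nat) \<Rightarrow> (nat \<Rightarrow> nat) \<Rightarrow> bool" where
  "round_exec m n f G S X G' \<longleftrightarrow>
     G \<in> lattice m n \<and> S \<subseteq> {..<n} \<and>
     (\<forall>i\<in>S. X i \<in> lattice m n \<and>
        (\<forall>k. X i k = G k \<or> X i k \<in> writes f S X k)) \<and>
     (\<forall>k. (writes f S X k = {} \<longrightarrow> G' k = G k) \<and>
          (writes f S X k \<noteq> {} \<longrightarrow> G' k \<in> writes f S X k))"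

end

theory Submission
  imports Defs
begin

theorem lemma1:
  fixes m n :: nat
    and f :: "nat \<Rightarrow> (nat \<Rightarrow> nat) \<Rightarrow> (nat \<Rightarrow> nat)"
    and G G' :: "nat \<Rightarrow> nat" and S :: "nat set" and X :: "nat \<Rightarrow> nat \<Rightarrow> nat"
  assumes maps: "\<forall>i<n. \<forall>x\<in>lattice m n. f i x \<in> lattice m n"
    and infl: "\<forall>i<n. inflationary m n (f i)"
    and round: "round_exec m n f G S X G'"
  shows "\<forall>j<n. (\<forall>v\<in>writes f S X j. G j \<le> v) \<and> G j \<le> G' j
               \<and> (G' j = G j \<longleftrightarrow> writes f S X j = {})"
proof (intro allI impI)
  fix j assume j: "j < n"
  let ?W = "writes f S X j"
  have Sn: "S \<subseteq> {..<n}" using round unfolding round_exec_def by blast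
  have fin: "finite ?W"
  proof -
    have "?W \<subseteq> (\<lambda>i. f i (X i) j) ` S" unfolding writes_def by blast
    moreover have "finite S" using Sn finite_subset by blast
    ultimately show ?thesis using finite_subset by blast
  qed
  have gt: "X i j < f i (X i) j" if "i \<in> S" "f i (X i) j \<noteq> X i j" for i
  proof -
    have "i < n" using that Sn by blast
    moreover have "X i \<in> lattice m n" using round that unfolding round_exec_def by blast
    ultimately have "X i j \<le> f i (X i) j" using infl j
      unfolding inflationary_def le_L_def by blast
    then show ?thesis using that by simp
  qed
  have strict: "\<forall>v\<in>?W. G j < v"
  proof (cases "?W = {}")
    case True then show ?thesis by simp
  next
    case False
    have "Min ?W \<in> ?W" using Min_in[OF fin False] .
    then obtain i where i: "i \<in> S" "f i (X i) j \<noteq> X i j" "Min ?W = f i (X i) j"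
      unfolding writes_def by blast
    have lt: "X i j < Min ?W" using gt[OF i(1,2)] i(3) by simp
    have "X i j = G j \<or> X i j \<in> ?W" using round i(1) unfolding round_exec_def by blast
    moreover have "X i j \<notin> ?W" using lt Min_le[OF fin] by fastforce
    ultimately have "G j < Min ?W" using lt by simp
    then show ?thesis using Min_le[OF fin] by fastforce
  qed
  have G': "(?W = {} \<longrightarrow> G' j = G j) \<and> (?W \<noteq> {} \<longrightarrow> G' j \<in> ?W)"
    using round unfolding round_exec_def by blast
  show "(\<forall>v\<in>?W. G j \<le> v) \<and> G j \<le> G' j \<and> (G' j = G j \<longleftrightarrow> ?W = {})"
    using strict G' by (metis less_imp_le order.irrefl order.refl)
qed

end
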